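(* Let $\mathcal{R}=(\mathcal{W},\mathcal{R}_1,\mathcal{R}_2)$ with $\mathcal{W}=\{1,\dots,m\}$, let $\mathcal{S}$, $L$, $K_1,\dots,K_4$ be constructed from $\mathcal{R}$ as below, and let $\mathcal{T}$ be a solution to the $\mathcal{S}$-cyclic triomino problem. For $s\in\mathbb{Z}^2$: if $p(s,1)$ holds, then $q(s+u_j,1)$ holds for every $1\le j\le 4$; and if $q(s,1)$ holds, then $p(s+u_j,1)$ holds for every $1\le j\le 4$.
   Context: A domino set is $\mathcal{R}=(\mathcal{W},\mathcal{R}_1,\mathcal{R}_2)$ with $\mathcal{W}$ non-empty finite and $\mathcal{R}_1,\mathcal{R}_2\subset\mathcal{W}^2$; here $\mathcal{W}=\{1,\dots,m\}$. Let $u_1=(1,0),u_2=(0,1),u_3=(-1,0),u_4=(0,-1)$, indices mod 4. Fix $n\ge 2m+1$ and regard integers as elements of $\mathbb{Z}_n$. Let $L=\{(w,0,0): w\in\mathcal{W}\}$, $K_1=L\cup\{(0,b,a):(a,b)\in\mathcal{R}_1\}$, $K_2=L\cup\{(0,a,b):(a,b)\in\mathcal{R}_2\}$, $K_3=L\cup\{(0,a,b):(a,b)\in\mathcal{R}_1\}$, $K_4=L\cup\{(0,b,a):(a,b)\in\mathcal{R}_2\}$, with $K_{i+4}=K_i$. Let $\mathcal{V}=\mathbb{Z}_n$, $\mathcal{S}_i=\{(a+k,b+k,c+k):(a,b,c)\in K_i, k\in\mathcal{V}\}$, $\mathcal{S}_{i+4}=\mathcal{S}_i$, and $\mathcal{S}=(\mathcal{V},\mathcal{S}_1,\dots,\mathcal{S}_4)$.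 A solution to the $\mathcal{S}$-cyclic triomino problem is a function $\mathcal{T}:\mathbb{Z}^2\to\mathcal{V}$ with $(\mathcal{T}(s),\mathcal{T}(s+u_i),\mathcal{T}(s+u_{i+1}))\in\mathcal{S}_i$ for all $s$ and $1\le i\le 4$. For $s\in\mathbb{Z}^2$, $i\in\mathbb{Z}$, $p(s,i)$ is the statement $(\mathcal{T}(s),\mathcal{T}(s+u_i),\mathcal{T}(s+u_{i+1}))\in L$ and $q(s,i)$ is the statement $(\mathcal{T}(s),\mathcal{T}(s+u_i),\mathcal{T}(s+u_{i+1}))\in K_i\setminus L$. *)

theory Defs
  imports Main
begin

text \<open>Elements of Z_n are represented by their canonical representatives in {0..<n} (ints).
  The alphabet W = {1..m}; domino relations R1, R2 are sets of pairs in W x W.\<close>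

definition shift :: "int \<times> int \<Rightarrow> int \<times> int \<Rightarrow> int \<times> int" where
  "shift s v = (fst s + fst v, snd s + snd v)"

definition u :: "int \<Rightarrow> int \<times> int" where
  "u i = (if i mod 4 = 1 then (1,0) else if i mod 4 = 2 then (0,1)
          else if i mod 4 = 3 then (-1,0) else (0,-1))"

definition Lset :: "int \<Rightarrow> (int \<times> int \<times> int) set" where
  "Lset m = {(w,0,0) | w. w \<in> {1..m}}"

definition Kset :: "int \<Rightarrow> (int \<times> int) set \<Rightarrow> (int \<times> int) set \<Rightarrow> int \<Rightarrow> (int \<times> int \<times> int) set" where
  "Kset m R1 R2 i = Lset m \<union>
     (if i mod 4 = 1 then {(0,b,a) | a b. (a,b) \<in> R1}
      else if i mod 4 = 2 then {(0,a,b) | a b. (a,b) \<in> R2}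
      else if i mod 4 = 3 then {(0,a,b) | a b. (a,b) \<in> R1}
      else {(0,b,a) | a b. (a,b) \<in> R2})"

definition Sset :: "int \<Rightarrow> int \<Rightarrow> (int \<times> int) set \<Rightarrow> (int \<times> int) set \<Rightarrow> int \<Rightarrow> (int \<times> int \<times> int) set" where
  "Sset n m R1 R2 i = {((a + k) mod n, (b + k) mod n, (c + k) mod n) | a b c k.
                          (a,b,c) \<in> Kset m R1 R2 i}"

definition triple :: "(int \<times> int \<Rightarrow> int) \<Rightarrow> int \<times> int \<Rightarrow> int \<Rightarrow> int \<times> int \<times> int" where
  "triple T s i = (T s, T (shift s (u i)), T (shift s (u (i + 1))))"

definition is_solution :: "int \<Rightarrow> int \<Rightarrow> (int \<times> int) set \<Rightarrow> (int \<times> int) set \<Rightarrow> (int \<times> int \<Rightarrow> int) \<Rightarrow> bool" where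
  "is_solution n m R1 R2 T \<longleftrightarrow> (\<forall>s. T s \<in> {0..<n}) \<and>
     (\<forall>s. \<forall>i\<in>{1..4}. triple T s i \<in> Sset n m R1 R2 i)"

definition p :: "int \<Rightarrow> (int \<times> int \<Rightarrow> int) \<Rightarrow> int \<times> int \<Rightarrow> int \<Rightarrow> bool" where
  "p m T s i \<longleftrightarrow> triple T s i \<in> Lset m"

definition q :: "int \<Rightarrow> (int \<times> int) set \<Rightarrow> (int \<times> int) set \<Rightarrow> (int \<times> int \<Rightarrow> int) \<Rightarrow> int \<times> int \<Rightarrow> int \<Rightarrow> bool" where
  "q m R1 R2 T s i \<longleftrightarrow> triple T s i \<in> Kset m R1 R2 i - Lset m"

end

theory Submission
  imports Defs
begin

definition up :: "int \<Rightarrow> int \<Rightarrow> int \<Rightarrow> int \<Rightarrow> bool" where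
  "up n m x y \<longleftrightarrow> (y - x) mod n \<in> {1..m}"

lemma up_asym:
  assumes "n \<ge> 2*m+1" "up n m x y" shows "\<not> up n m y x"
proof
  assume h: "up n m y x"
  have "(x - y) mod n = (- (y - x)) mod n" by simp
  also have "\<dots> = (if (y - x) mod n = 0 then 0 else n - (y - x) mod n)"
    by (rule zmod_zminus1_eq_if)
  finally show False using assms h unfolding up_def by (auto split: if_splits)
qed

lemma modshift: "((a + k) mod n - k mod (n::int)) mod n = a mod n"
  by (simp add: mod_diff_eq)

lemma Kset_cases:
  assumes "i \<in> {1..4}" "(a,b,c) \<in> Kset m R1 R2 i"
    "R1 \<subseteq> {1..m} \<times> {1..m}" "R2 \<subseteq> {1..m} \<times> {1..m}"
  shows "(a \<in> {1..m} \<and> b = 0 \<and> c = 0) \<or> (a = 0 \<and> b \<in> {1..m} \<and> c \<in> {1..m})"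
  using assms unfolding Kset_def Lset_def
  by (auto split: if_splits)

lemma classify:
  assumes "is_solution n m R1 R2 T" "i \<in> {1..4}" "n \<ge> 2*m+1" "m \<ge> 1"
    "R1 \<subseteq> {1..m} \<times> {1..m}" "R2 \<subseteq> {1..m} \<times> {1..m}"
  shows "(T (shift s (u i)) = T (shift s (u (i+1))) \<and> up n m (T (shift s (u i))) (T s))
       \<or> (up n m (T s) (T (shift s (u i))) \<and> up n m (T s) (T (shift s (u (i+1)))))"
proof -
  have "triple T s i \<in> Sset n m R1 R2 i" using assms(1,2) unfolding is_solution_def by blast
  then obtain a b c k where e: "T s = (a+k) mod n" "T (shift s (u i)) = (b+k) mod n"
     "T (shift s (u (i+1))) = (c+k) mod n" and abc: "(a,b,c) \<in> Kset m R1 R2 i"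
    unfolding Sset_def triple_def by auto
  from Kset_cases[OF assms(2) abc assms(5,6)]
  show ?thesis
  proof
    assume h: "a \<in> {1..m} \<and> b = 0 \<and> c = 0"
    then have "a mod n = a" using assms(3) by auto
    then show ?thesis using h e modshift[of a k n] unfolding up_def by auto
  next
    assume h: "a = 0 \<and> b \<in> {1..m} \<and> c \<in> {1..m}"
    then have "b mod n = b" "c mod n = c" using assms(3) by auto
    then show ?thesis using h e modshift[of b k n] modshift[of c k n] unfolding up_def by auto
  qed
qed

lemma u5: "u 5 = u 1" by (simp add: u_def)

lemma types:
  assumes "is_solution n m R1 R2 T" "n \<ge> 2*m+1" "m \<ge> 1"
    "R1 \<subseteq> {1..m} \<times> {1..m}" "R2 \<subseteq> {1..m} \<times> {1..m}"
  shows "(\<forall>j\<in>{1..4}. up n m (T (shift s (u j))) (T s) \<and> T (shift s (u j)) = T (shift s (u 1)))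
       \<or> (\<forall>j\<in>{1..4}. up n m (T s) (T (shift s (u j))))"
proof -
  note cl = classify[OF assms(1) _ assms(2,3,4,5), of _ s]
  have c1: "(T (shift s (u 1)) = T (shift s (u 2)) \<and> up n m (T (shift s (u 1))) (T s))
       \<or> (up n m (T s) (T (shift s (u 1))) \<and> up n m (T s) (T (shift s (u 2))))"
    using cl[of 1] by simp
  have c2: "(T (shift s (u 2)) = T (shift s (u 3)) \<and> up n m (T (shift s (u 2))) (T s))
       \<or> (up n m (T s) (T (shift s (u 2))) \<and> up n m (T s) (T (shift s (u 3))))"
    using cl[of 2] by simp
  have c3: "(T (shift s (u 3)) = T (shift s (u 4)) \<and> up n m (T (shift s (u 3))) (T s))
       \<or> (up n m (T s) (T (shift s (u 3))) \<and> up n m (T s) (T (shift s (u 4))))"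
    using cl[of 3] by simp
  have c4: "(T (shift s (u 4)) = T (shift s (u 1)) \<and> up n m (T (shift s (u 4))) (T s))
       \<or> (up n m (T s) (T (shift s (u 4))) \<and> up n m (T s) (T (shift s (u 1))))"
    using cl[of 4] u5 by simp
  have j: "j \<in> {1..4} \<Longrightarrow> j = 1 \<or> j = 2 \<or> j = 3 \<or> j = (4::int)" for j by auto
  show ?thesis
    using c1 c2 c3 c4 up_asym[OF assms(2)] j by metis
qed

lemma back_nb:
  assumes "j \<in> {1..4}" shows "\<exists>j'\<in>{1..4}. shift (shift s (u j)) (u j') = s"
proof -
  have "j = 1 \<or> j = 2 \<or> j = 3 \<or> j = (4::int)" using assms by auto
  then show ?thesis
  proof (elim disjE)
    assume "j = 1" then show ?thesis by (intro bexI[of _ 3]) (auto simp: shift_def u_def)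
  next
    assume "j = 2" then show ?thesis by (intro bexI[of _ 4]) (auto simp: shift_def u_def)
  next
    assume "j = 3" then show ?thesis by (intro bexI[of _ 1]) (auto simp: shift_def u_def)
  next
    assume "j = 4" then show ?thesis by (intro bexI[of _ 2]) (auto simp: shift_def u_def)
  qed
qed

lemma S1_zero:
  assumes "is_solution n m R1 R2 T" "n \<ge> 2*m+1" "m \<ge> 1"
    "R1 \<subseteq> {1..m} \<times> {1..m}" "T t = 0"
    "\<not> (T (shift t (u 1)) = T (shift t (u 2)) \<and> up n m (T (shift t (u 1))) (T t))"
  shows "q m R1 R2 T t 1"
proof -
  have "\<forall>s. \<forall>i\<in>{1..4}. triple T s i \<in> Sset n m R1 R2 i"
    using assms(1) unfolding is_solution_def by (elim conjE)
  then have "\<forall>i\<in>{1..4}. triple T t i \<in> Sset n m R1 R2 i" by (rule spec)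
  then have "triple T t 1 \<in> Sset n m R1 R2 1" by (rule bspec) simp
  then obtain a b c k where e: "T t = (a+k) mod n" "T (shift t (u 1)) = (b+k) mod n"
     "T (shift t (u 2)) = (c+k) mod n" and abc: "(a,b,c) \<in> Kset m R1 R2 1"
    unfolding Sset_def triple_def by auto
  show ?thesis
  proof (cases "(a,b,c) \<in> Lset m")
    case True
    then have h: "a \<in> {1..m}" "b = 0" "c = 0" unfolding Lset_def by auto
    then have "a mod n = a" using assms(2) by auto
    then have "up n m (T (shift t (u 1))) (T t)"
      using h e modshift[of a k n] unfolding up_def by auto
    then show ?thesis using assms(6) e h by auto
  next
    case False
    then obtain a' b' where h: "a = 0" "b = b'" "c = a'" "(a',b') \<in> R1"
      using abc unfolding Kset_def by auto
    then have r: "a' \<in> {1..m}" "b' \<in> {1..m}" using assms(4) by auto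
    have k0: "k mod n = 0" using e(1) assms(5) h by simp
    have bm: "b' mod n = b'" "a' mod n = a'" using r assms(2) by auto
    have "(b' + k) mod n = (b' + k mod n) mod n" by (simp add: mod_add_right_eq)
    then have y: "T (shift t (u 1)) = b'" using e(2) k0 bm h by simp
    have "(a' + k) mod n = (a' + k mod n) mod n" by (simp add: mod_add_right_eq)
    then have z: "T (shift t (u 2)) = a'" using e(3) k0 bm h by simp
    show ?thesis unfolding q_def triple_def Kset_def Lset_def
      using y z h assms(5) by (auto simp: u_def)
  qed
qed

theorem lemma3p4:
  fixes m n :: int and R1 R2 :: "(int \<times> int) set" and T :: "int \<times> int \<Rightarrow> int"
    and s :: "int \<times> int"
  assumes "m \<ge> 1"
    and "R1 \<subseteq> {1..m} \<times> {1..m}" and "R2 \<subseteq> {1..m} \<times> {1..m}"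
    and "n \<ge> 2 * m + 1"
    and "is_solution n m R1 R2 T"
  shows "(p m T s 1 \<longrightarrow> (\<forall>j\<in>{1..4}. q m R1 R2 T (shift s (u j)) 1))
       \<and> (q m R1 R2 T s 1 \<longrightarrow> (\<forall>j\<in>{1..4}. p m T (shift s (u j)) 1))"
proof (intro conjI impI ballI)
  note ty = types[OF assms(5,4,1,2,3)]
  note asy = up_asym[OF assms(4)]
  have rng: "T x \<in> {0..<n}" for x
  proof -
    have "\<forall>s. T s \<in> {0..<n}" using assms(5) unfolding is_solution_def by (elim conjE)
    then show ?thesis by (rule spec)
  qed
  have u2: "u (1+1) = u 2" by simp
  fix j :: int assume j: "j \<in> {1..4}"
  {
    assume "p m T s 1"
    then obtain w where w: "w \<in> {1..m}" "T s = w" "T (shift s (u 1)) = 0" "T (shift s (u 2)) = 0"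
      unfolding p_def triple_def Lset_def by auto
    have wm: "w mod n = w" using w assms(4) by auto
    have up0: "up n m 0 w" using wm w unfolding up_def by simp
    have nvl: "\<not> (\<forall>j\<in>{1..4}. up n m (T s) (T (shift s (u j))))"
    proof
      assume "\<forall>j\<in>{1..4}. up n m (T s) (T (shift s (u j)))"
      then have "up n m (T s) (T (shift s (u 1)))" by (rule bspec) simp
      then have "up n m w 0" using w by simp
      then show False using asy up0 by blast
    qed
    have pk: "\<forall>j\<in>{1..4}. up n m (T (shift s (u j))) (T s) \<and> T (shift s (u j)) = T (shift s (u 1))"
      using ty[of s] nvl by blast
    define t where "t = shift s (u j)"
    have "T (shift s (u j)) = T (shift s (u 1))" using pk j by blast
    then have t0: "T t = 0" using w(3) unfolding t_def by (rule trans)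
    obtain j' where j': "j' \<in> {1..4}" "shift t (u j') = s" using back_nb[OF j, of s] t_def by blast
    have nopk: "\<not> up n m (T s) (T t)" using up0 asy w t0 by simp
    have npk2: "\<not> (\<forall>j\<in>{1..4}. up n m (T (shift t (u j))) (T t) \<and> T (shift t (u j)) = T (shift t (u 1)))"
    proof
      assume "\<forall>j\<in>{1..4}. up n m (T (shift t (u j))) (T t) \<and> T (shift t (u j)) = T (shift t (u 1))"
      then have "up n m (T (shift t (u j'))) (T t)" using j'(1) by blast
      then show False using j'(2) nopk by simp
    qed
    have vl: "\<forall>j\<in>{1..4}. up n m (T t) (T (shift t (u j)))"
      using ty[of t] npk2 by blast
    have "up n m (T t) (T (shift t (u 1)))" using vl by simp
    then have "\<not> up n m (T (shift t (u 1))) (T t)" using asy by blast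
    then have "q m R1 R2 T t 1"
      by (intro S1_zero[OF assms(5,4,1,2) t0]) simp
    then show "q m R1 R2 T (shift s (u j)) 1" unfolding t_def .
  }
  {
    assume "q m R1 R2 T s 1"
    then have "triple T s 1 \<in> {(0,b,a) | a b. (a,b) \<in> R1}"
      unfolding q_def Kset_def by simp blast
    then obtain a b where "triple T s 1 = (0,b,a)" "(a,b) \<in> R1" by blast
    then have h: "T s = 0" "T (shift s (u 1)) = b" "T (shift s (u 2)) = a" "(a,b) \<in> R1"
      unfolding triple_def by simp_all
    have b: "b \<in> {1..m}" using h(4) assms(2) by blast
    have bm: "b mod n = b" using b assms(4) by simp
    have u1: "up n m (T s) (T (shift s (u 1)))" unfolding up_def using h(1,2) bm b by simp
    have npk: "\<not> (\<forall>j\<in>{1..4}. up n m (T (shift s (u j))) (T s) \<and> T (shift s (u j)) = T (shift s (u 1)))"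
    proof
      assume "\<forall>j\<in>{1..4}. up n m (T (shift s (u j))) (T s) \<and> T (shift s (u j)) = T (shift s (u 1))"
      then have "up n m (T (shift s (u 1))) (T s) \<and> T (shift s (u 1)) = T (shift s (u 1))" by (rule bspec) simp
      then have "up n m (T (shift s (u 1))) (T s)" by (rule conjunct1)
      then show False using asy u1 by blast
    qed
    have vl: "\<forall>j\<in>{1..4}. up n m (T s) (T (shift s (u j)))"
      using ty[of s] npk by blast
    define t where "t = shift s (u j)"
    have ut: "up n m (T s) (T t)" using vl j t_def by blast
    have tm: "T t \<in> {1..m}" using ut h rng[of t] unfolding up_def by auto
    obtain j' where j': "j' \<in> {1..4}" "shift t (u j') = s" using back_nb[OF j, of s] t_def by blast
    have nvl: "\<not> (\<forall>j\<in>{1..4}. up n m (T t) (T (shift t (u j))))"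
    proof
      assume "\<forall>j\<in>{1..4}. up n m (T t) (T (shift t (u j)))"
      then have "up n m (T t) (T (shift t (u j')))" using j'(1) by blast
      then have "up n m (T t) (T s)" using j'(2) by simp
      then show False using asy ut by blast
    qed
    have pk: "\<forall>j\<in>{1..4}. up n m (T (shift t (u j))) (T t) \<and> T (shift t (u j)) = T (shift t (u 1))"
      using ty[of t] nvl by blast
    have "T (shift t (u j')) = T (shift t (u 1))" using pk j'(1) by blast
    then have z1: "T (shift t (u 1)) = 0" using j'(2) h by simp
    have "up n m (T (shift t (u 2))) (T t) \<and> T (shift t (u 2)) = T (shift t (u 1))" using pk by (rule bspec) simp
    then have "T (shift t (u 2)) = T (shift t (u 1))" by (rule conjunct2)
    then have z2: "T (shift t (u 2)) = 0" using z1 by simp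
    have "p m T t 1" unfolding p_def triple_def Lset_def
      using tm z1 z2 u2 by simp
    then show "p m T (shift s (u j)) 1" unfolding t_def .
  }
qed

end
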